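(* Let $\Phi=\vec a_1\wedge\cdots\wedge\vec a_m$, and let $\hat\Phi$ be its pruned formula. For $1\le M\le m$ define $$\Delta(M)=\mathbb{E}\left[\log\frac{Z(\hat\Phi_1(M,m-M))}{Z(\hat\Phi_1(M-1,m-M))}\cdot\log\frac{Z(\hat\Phi_2(M,m-M))}{Z(\hat\Phi_2(M-1,m-M))}\right],$$ $$\Delta'(M)=\mathbb{E}\left[\log\frac{Z(\hat\Phi_1(M-1,m-M+1))}{Z(\hat\Phi_1(M-1,m-M))}\cdot\log\frac{Z(\hat\Phi_2(M-1,m-M+1))}{Z(\hat\Phi_2(M-1,m-M))}\right].$$ Then $$\mathrm{Var}[\log Z(\hat\Phi)]=\sum_{M=1}^m\big(\Delta(M)-\Delta'(M)\big).$$
   Context: A 2-CNF is a conjunction of clauses, each the disjunction of two literals on two distinct variables. $Z(\cdot)$ denotes the number of satisfying assignments. Fix $0<d<2$ and $m=m_n\sim dn/2$. A uniformly random clause is drawn uniformly from the $4\binom n2$ clauses on two distinct variables among $x_1,\dots,x_n$. Let $(\vec a_i)_{i\ge1}$, $(\vec a'_i)_{i\ge1}$, $(\vec a''_i)_{i\ge1}$ be mutually independent sequences of independent uniformly random clauses. For integers $M,M'\ge0$ set $$\Phi_1(M,M')=\vec a_1\wedge\cdots\wedge\vec a_M\wedge\vec a'_1\wedge\cdots\wedge\vec a'_{M'},\qquad \Phi_2(M,M')=\vec a_1\wedge\cdots\wedge\vec a_M\wedge\vec a''_1\wedge\cdots\wedge\vec a''_{M'}.$$ Write $\hat\Phi_h(M,M')$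 for the pruned formula of $\Phi_h(M,M')$. Pruning is defined as follows. For a 2-CNF $\Psi$ and a set $\mathcal L_0$ of literals, let $\mathcal L(\Psi,\mathcal L_0)$ be the closure of $\mathcal L_0$ under: if $\Psi$ has a clause $l\vee\neg l'$ with $l'\in\mathcal L$, add $l$. Let $\mathcal V_0$ be the set of variables $x$ with both $x,\neg x\in\mathcal L(\Psi,\mathcal L_0)$. The conflict clauses $\mathcal C(\Psi,\mathcal L_0)$ are the clauses of $\Psi$ both of whose variables lie in $\mathcal V_0$. Then $\hat\Psi$ is $\Psi$ with all clauses in $\bigcup_l\mathcal C(\Psi,\{l\})$ removed, $l$ ranging over all literals. Pruned formulas are always satisfiable. *)

theory Defs
  imports "HOL-Probability.Probability"
begin

text \<open>Variables are natural numbers; x_1,...,x_n are represented by 0,...,n-1.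
  A literal is a pair (variable, sign); (x, True) is x and (x, False) is the negation of x.\<close>

type_synonym lit = "nat \<times> bool"
type_synonym clause = "lit set"
type_synonym cnf = "clause list"

definition neg_lit :: "lit \<Rightarrow> lit" where
  "neg_lit l = (fst l, \<not> snd l)"

definition clauses :: "nat \<Rightarrow> clause set" where
  "clauses n = {c. \<exists>u v su sv. u < n \<and> v < n \<and> u \<noteq> v \<and> c = {(u, su), (v, sv)}}"

definition lit_sat :: "nat set \<Rightarrow> lit \<Rightarrow> bool" where
  "lit_sat \<sigma> l = ((fst l \<in> \<sigma>) = snd l)"

text \<open>Assignments of x_1..x_n: the set of variables set to true.\<close>
definition Z :: "nat \<Rightarrow> cnf \<Rightarrow> nat" where
  "Z n \<Psi> = card {\<sigma>. \<sigma> \<subseteq> {..<n} \<and> (\<forall>c\<in>set \<Psi>. \<exists>l\<in>c. lit_sat \<sigma> l)}"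

inductive_set lit_closure :: "cnf \<Rightarrow> lit set \<Rightarrow> lit set" for \<Psi> L0 where
  base: "l \<in> L0 \<Longrightarrow> l \<in> lit_closure \<Psi> L0"
| step: "l' \<in> lit_closure \<Psi> L0 \<Longrightarrow> {l, neg_lit l'} \<in> set \<Psi> \<Longrightarrow> l \<in> lit_closure \<Psi> L0"

definition conflict_vars :: "cnf \<Rightarrow> lit set \<Rightarrow> nat set" where
  "conflict_vars \<Psi> L0 = {x. (x, True) \<in> lit_closure \<Psi> L0 \<and> (x, False) \<in> lit_closure \<Psi> L0}"

definition conflict_clauses :: "cnf \<Rightarrow> lit set \<Rightarrow> clause set" where
  "conflict_clauses \<Psi> L0 = {c \<in> set \<Psi>. \<forall>l\<in>c. fst l \<in> conflict_vars \<Psi> L0}"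

definition prune :: "cnf \<Rightarrow> cnf" where
  "prune \<Psi> = filter (\<lambda>c. c \<notin> (\<Union>l. conflict_clauses \<Psi> {l})) \<Psi>"

text \<open>Sample space: three independent sequences (a, a', a'') of m i.i.d. uniform clauses each
  (only the first m entries of each sequence are ever used).\<close>
definition clause_seqs :: "nat \<Rightarrow> nat \<Rightarrow> clause list set" where
  "clause_seqs n m = {xs. length xs = m \<and> set xs \<subseteq> clauses n}"

definition sample :: "nat \<Rightarrow> nat \<Rightarrow> (clause list \<times> clause list \<times> clause list) pmf" where
  "sample n m = pmf_of_set (clause_seqs n m \<times> clause_seqs n m \<times> clause_seqs n m)"

definition Phi1 :: "clause list \<times> clause list \<times> clause list \<Rightarrow> nat \<Rightarrow> nat \<Rightarrow> cnf" where
  "Phi1 \<omega> M M' = (case \<omega> of (a, a', a'') \<Rightarrow> take M a @ take M' a')"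

definition Phi2 :: "clause list \<times> clause list \<times> clause list \<Rightarrow> nat \<Rightarrow> nat \<Rightarrow> cnf" where
  "Phi2 \<omega> M M' = (case \<omega> of (a, a', a'') \<Rightarrow> take M a @ take M' a'')"

definition logZ :: "nat \<Rightarrow> cnf \<Rightarrow> real" where
  "logZ n \<Psi> = ln (real (Z n (prune \<Psi>)))"

definition Delta :: "nat \<Rightarrow> nat \<Rightarrow> nat \<Rightarrow> real" where
  "Delta n m M = measure_pmf.expectation (sample n m) (\<lambda>\<omega>.
      ln (real (Z n (prune (Phi1 \<omega> M (m - M)))) / real (Z n (prune (Phi1 \<omega> (M - 1) (m - M)))))
    * ln (real (Z n (prune (Phi2 \<omega> M (m - M)))) / real (Z n (prune (Phi2 \<omega> (M - 1) (m - M))))))"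

definition Delta' :: "nat \<Rightarrow> nat \<Rightarrow> nat \<Rightarrow> real" where
  "Delta' n m M = measure_pmf.expectation (sample n m) (\<lambda>\<omega>.
      ln (real (Z n (prune (Phi1 \<omega> (M - 1) (m - M + 1)))) / real (Z n (prune (Phi1 \<omega> (M - 1) (m - M)))))
    * ln (real (Z n (prune (Phi2 \<omega> (M - 1) (m - M + 1)))) / real (Z n (prune (Phi2 \<omega> (M - 1) (m - M))))))"

end

theory Submission
  imports Defs
begin


lemma neg_neg[simp]: "neg_lit (neg_lit l) = l"
  by (simp add: neg_lit_def)

lemma neg_ne[simp]: "neg_lit l \<noteq> l" "l \<noteq> neg_lit l"
  by (auto simp: neg_lit_def prod_eq_iff)

lemma cl_mono: "x \<in> lit_closure \<Psi> L \<Longrightarrow> set \<Psi> \<subseteq> set \<Psi>' \<Longrightarrow> x \<in> lit_closure \<Psi>' L"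
  by (induction rule: lit_closure.induct) (auto intro: lit_closure.intros)

lemma cl_trans: "x \<in> lit_closure \<Psi> A \<Longrightarrow> A \<subseteq> lit_closure \<Psi> B \<Longrightarrow> x \<in> lit_closure \<Psi> B"
  by (induction rule: lit_closure.induct) (auto intro: lit_closure.intros)

lemma cl_contra: "a \<in> lit_closure \<Psi> {b} \<Longrightarrow> neg_lit b \<in> lit_closure \<Psi> {neg_lit a}"
proof (induction rule: lit_closure.induct)
  case (base l)
  then show ?case by (auto intro: lit_closure.base)
next
  case (step l' l)
  have "neg_lit l' \<in> lit_closure \<Psi> {neg_lit l}"
    by (rule lit_closure.step[of "neg_lit l"]) (auto intro: lit_closure.base simp: insert_commute step.hyps)
  then show ?case using step.IH cl_trans by blast
qed

lemma two_sat:
  assumes "\<forall>c\<in>set \<Psi>. \<exists>a b. c = {a, b}"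
    and "\<forall>l. neg_lit l \<notin> lit_closure \<Psi> {l}"
  shows "\<exists>\<sigma>. \<forall>c\<in>set \<Psi>. \<exists>l\<in>c. lit_sat \<sigma> l"
  using assms
proof (induction "length \<Psi>" arbitrary: \<Psi> rule: less_induct)
  case less
  show ?case
  proof (cases "\<Psi> = []")
    case True then show ?thesis by simp
  next
    case False
    then obtain c where c: "c \<in> set \<Psi>" by (cases \<Psi>) auto
    then obtain a b where ab: "c = {a, b}" using less.prems by blast
    define L where "L = lit_closure \<Psi> {a}"
    have cons: "\<not> (z \<in> L \<and> neg_lit z \<in> L)" for z
    proof
      assume h: "z \<in> L \<and> neg_lit z \<in> L"
      then have "neg_lit a \<in> lit_closure \<Psi> {z}"
        using cl_contra[of "neg_lit z" \<Psi> a] unfolding L_def by simp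
      then have "neg_lit a \<in> lit_closure \<Psi> {a}"
        using h cl_trans[of "neg_lit a" \<Psi> "{z}" "{a}"] unfolding L_def by blast
      then show False using less.prems by blast
    qed
    define V where "V = fst ` L"
    define \<Psi>' where "\<Psi>' = filter (\<lambda>c. \<forall>x\<in>c. fst x \<notin> V) \<Psi>"
    have aL: "a \<in> L" unfolding L_def by (auto intro: lit_closure.base)
    have "length \<Psi>' < length \<Psi>"
      unfolding \<Psi>'_def using c ab aL V_def
      by (intro length_filter_less) auto
    moreover have "\<forall>c\<in>set \<Psi>'. \<exists>a b. c = {a, b}" using less.prems unfolding \<Psi>'_def by auto
    moreover have "\<forall>l. neg_lit l \<notin> lit_closure \<Psi>' {l}"
    proof
      fix l
      show "neg_lit l \<notin> lit_closure \<Psi>' {l}"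
      proof
        assume h: "neg_lit l \<in> lit_closure \<Psi>' {l}"
        have "set \<Psi>' \<subseteq> set \<Psi>" unfolding \<Psi>'_def by auto
        then have "neg_lit l \<in> lit_closure \<Psi> {l}" using h cl_mono by blast
        then show False using less.prems(2) by blast
      qed
    qed
    ultimately obtain \<sigma>' where \<sigma>': "\<forall>c\<in>set \<Psi>'. \<exists>l\<in>c. lit_sat \<sigma>' l"
      using less.hyps by blast
    define \<sigma> where "\<sigma> = {v \<in> V. (v, True) \<in> L} \<union> (\<sigma>' - V)"
    have satL: "lit_sat \<sigma> y" if "y \<in> L" for y
    proof (cases y)
      case (Pair v s)
      have vV: "v \<in> V" using that Pair V_def by force
      show ?thesis
      proof (cases s)
        case True then show ?thesis using Pair that vV by (auto simp: lit_sat_def \<sigma>_def)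
      next
        case False
        then have "(v, True) \<notin> L" using cons[of y] that Pair by (auto simp: neg_lit_def)
        then show ?thesis using Pair False vV by (auto simp: lit_sat_def \<sigma>_def)
      qed
    qed
    show ?thesis
    proof (intro exI ballI)
      fix c assume c: "c \<in> set \<Psi>"
      show "\<exists>l\<in>c. lit_sat \<sigma> l"
      proof (cases "c \<in> set \<Psi>'")
        case True
        then obtain l where l: "l \<in> c" "lit_sat \<sigma>' l" using \<sigma>' by blast
        have "fst l \<notin> V" using True l unfolding \<Psi>'_def by auto
        then have "lit_sat \<sigma> l" using l by (auto simp: lit_sat_def \<sigma>_def)
        then show ?thesis using l by blast
      next
        case False
        then obtain x where x: "x \<in> c" "fst x \<in> V" using c unfolding \<Psi>'_def by auto
        then obtain y where y: "y \<in> L" "fst y = fst x" unfolding V_def by auto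
        have "y = x \<or> y = neg_lit x" using y(2)
          by (cases x; cases y) (auto simp: neg_lit_def)
        moreover obtain p q where pq: "c = {p, q}" using c less.prems by blast
        have "\<exists>r\<in>c. r \<in> L"
        proof (cases "y = x")
          case True then show ?thesis using x y by blast
        next
          case False
          then have nx: "neg_lit x \<in> L" using \<open>y = x \<or> y = neg_lit x\<close> y by auto
          obtain r where r: "c = {r, x}"
          proof (cases "x = p")
            case True then show ?thesis using that[of q] pq by (auto simp: insert_commute)
          next
            case False then have "x = q" using pq x(1) by auto
            then show ?thesis using that[of p] pq by auto
          qed
          have "r \<in> L" unfolding L_def
            by (rule lit_closure.step[of "neg_lit x"]) (use nx c r in \<open>auto simp: L_def\<close>)
          then show ?thesis using r by blast
        qed
        then show ?thesis using satL by blast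
      qed
    qed
  qed
qed

lemma prune_no_neg: "neg_lit l \<notin> lit_closure (prune \<Psi>) {l}"
proof
  assume "neg_lit l \<in> lit_closure (prune \<Psi>) {l}"
  then obtain l' where l': "l' \<in> lit_closure (prune \<Psi>) {l}" "{neg_lit l, neg_lit l'} \<in> set (prune \<Psi>)"
    by (cases rule: lit_closure.cases) auto
  define L where "L = lit_closure \<Psi> {l}"
  have sub: "set (prune \<Psi>) \<subseteq> set \<Psi>" by (auto simp: prune_def)
  have cin: "{neg_lit l, neg_lit l'} \<in> set \<Psi>" using l' sub by blast
  have lL: "l \<in> L" unfolding L_def by (auto intro: lit_closure.base)
  have l'L: "l' \<in> L" unfolding L_def using l'(1) cl_mono sub by blast
  have nlL: "neg_lit l \<in> L" unfolding L_def
    by (rule lit_closure.step[OF l'L[unfolded L_def]]) (use cin in simp)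
  have nl'L: "neg_lit l' \<in> L" unfolding L_def
    by (rule lit_closure.step[OF lL[unfolded L_def]]) (use cin in \<open>simp add: insert_commute\<close>)
  have cv: "fst k \<in> conflict_vars \<Psi> {l}" if "k \<in> L" "neg_lit k \<in> L" for k
  proof (cases k)
    case (Pair v s)
    then show ?thesis using that unfolding conflict_vars_def L_def
      by (cases s) (auto simp: neg_lit_def)
  qed
  have "{neg_lit l, neg_lit l'} \<in> conflict_clauses \<Psi> {l}"
    unfolding conflict_clauses_def using cin cv[OF lL nlL] cv[OF l'L nl'L]
    by (auto simp: neg_lit_def)
  then show False using l'(2) unfolding prune_def by (auto simp del: conflict_clauses_def) (metis prod.collapse)
qed

lemma Z_pos:
  assumes "set \<Psi> \<subseteq> clauses n"
  shows "Z n (prune \<Psi>) > 0"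
proof -
  have sub: "set (prune \<Psi>) \<subseteq> clauses n" using assms by (auto simp: prune_def)
  have "\<forall>c\<in>set (prune \<Psi>). \<exists>a b. c = {a, b}"
  proof
    fix c assume "c \<in> set (prune \<Psi>)"
    then obtain u v su sv where "c = {(u,su),(v,sv)}" using sub unfolding clauses_def by auto
    then show "\<exists>a b. c = {a, b}" by blast
  qed
  then obtain \<sigma> where \<sigma>: "\<forall>c\<in>set (prune \<Psi>). \<exists>l\<in>c. lit_sat \<sigma> l"
    using two_sat prune_no_neg by blast
  have "\<sigma> \<inter> {..<n} \<in> {\<sigma>. \<sigma> \<subseteq> {..<n} \<and> (\<forall>c\<in>set (prune \<Psi>). \<exists>l\<in>c. lit_sat \<sigma> l)}"
  proof (safe)
    fix c assume c: "c \<in> set (prune \<Psi>)"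
    then obtain l where l: "l \<in> c" "lit_sat \<sigma> l" using \<sigma> by blast
    have "fst l < n" using sub c l(1) by (auto simp: clauses_def)
    then show "\<exists>l\<in>c. lit_sat (\<sigma> \<inter> {..<n}) l" using l by (auto simp: lit_sat_def)
  qed
  moreover have "finite {\<sigma>. \<sigma> \<subseteq> {..<n} \<and> (\<forall>c\<in>set (prune \<Psi>). \<exists>l\<in>c. lit_sat \<sigma> l)}"
    by (rule finite_subset[of _ "Pow {..<n}"]) auto
  ultimately show ?thesis unfolding Z_def using card_gt_0_iff by blast
qed

lemma Z_prune_set:
  assumes "set \<Psi> = set \<Psi>'"
  shows "Z n (prune \<Psi>) = Z n (prune \<Psi>')"
proof -
  have "lit_closure \<Psi> = lit_closure \<Psi>'"
  proof (intro ext)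
    fix L show "lit_closure \<Psi> L = lit_closure \<Psi>' L"
      using cl_mono[of _ \<Psi> L \<Psi>'] cl_mono[of _ \<Psi>' L \<Psi>] assms by auto
  qed
  then have "conflict_clauses \<Psi> = conflict_clauses \<Psi>'"
    using assms by (intro ext) (simp add: conflict_clauses_def conflict_vars_def)
  then have "set (prune \<Psi>) = set (prune \<Psi>')" using assms by (simp add: prune_def)
  then show ?thesis by (simp add: Z_def)
qed



definition Om :: "nat \<Rightarrow> nat \<Rightarrow> (clause list \<times> clause list \<times> clause list) set" where
  "Om n mm = clause_seqs n mm \<times> clause_seqs n mm \<times> clause_seqs n mm"

definition G :: "nat \<Rightarrow> nat \<Rightarrow> nat \<Rightarrow> real" where
  "G n mm M = (\<Sum>\<omega>\<in>Om n mm. logZ n (Phi1 \<omega> M (mm - M)) * logZ n (Phi2 \<omega> M (mm - M)))"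

lemma clause_seqs_finite: "finite (clause_seqs n mm)"
proof -
  have "finite (clauses n)"
    by (rule finite_subset[of _ "Pow ({..<n} \<times> UNIV)"]) (auto simp: clauses_def)
  then show ?thesis unfolding clause_seqs_def
    using finite_lists_length_eq[of "clauses n" mm] by (simp add: conj_commute)
qed

lemma clause_seqs_ne: "n \<ge> 2 \<Longrightarrow> clause_seqs n mm \<noteq> {}"
proof -
  assume "n \<ge> 2"
  then have "0 < n" "1 < n" by auto
  then have "{(0, True), (1, True)} \<in> clauses n" unfolding clauses_def
    by (intro CollectI exI[of _ 0] exI[of _ 1] exI[of _ True]) simp
  then have "replicate mm {(0, True), (1, True)} \<in> clause_seqs n mm"
    by (auto simp: clause_seqs_def)
  then show ?thesis by blast
qed

lemma Om_finite: "finite (Om n mm)" by (simp add: Om_def clause_seqs_finite)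
lemma Om_ne: "n \<ge> 2 \<Longrightarrow> Om n mm \<noteq> {}" by (simp add: Om_def clause_seqs_ne)

lemma expect_eq: "n \<ge> 2 \<Longrightarrow> measure_pmf.expectation (sample n mm) f = sum f (Om n mm) / card (Om n mm)"
  unfolding sample_def Om_def[symmetric]
  by (rule integral_pmf_of_set[OF Om_ne Om_finite])

lemma Phi_sub:
  assumes "\<omega> \<in> Om n mm"
  shows "set (Phi1 \<omega> M M') \<subseteq> clauses n" "set (Phi2 \<omega> M M') \<subseteq> clauses n"
proof -
  obtain a b c where w: "\<omega> = (a, b, c)" by (cases \<omega>) auto
  then have s: "set a \<subseteq> clauses n" "set b \<subseteq> clauses n" "set c \<subseteq> clauses n"
    using assms by (auto simp: Om_def clause_seqs_def)
  have t: "set (take M a) \<subseteq> clauses n" "set (take M' b) \<subseteq> clauses n" "set (take M' c) \<subseteq> clauses n"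
    using s set_take_subset by (metis order_trans)+
  show "set (Phi1 \<omega> M M') \<subseteq> clauses n" "set (Phi2 \<omega> M M') \<subseteq> clauses n"
    using t by (simp_all add: w Phi1_def Phi2_def)
qed

lemma ln_ratio:
  assumes "set \<Psi> \<subseteq> clauses n" "set \<Psi>' \<subseteq> clauses n"
  shows "ln (real (Z n (prune \<Psi>)) / real (Z n (prune \<Psi>'))) = logZ n \<Psi> - logZ n \<Psi>'"
  using Z_pos[OF assms(1)] Z_pos[OF assms(2)] by (simp add: logZ_def ln_div)

lemma take_upd_Suc: "j < length xs \<Longrightarrow> take (Suc j) (xs[j := v]) = take j xs @ [v]"
  by (simp add: take_Suc_conv_app_nth take_update_cancel)

lemma take_upd_same: "take j (xs[j := v]) = take j xs"
  by (simp add: take_update_cancel)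

lemma swap1_sum:
  fixes H :: "_ \<Rightarrow> real"
  assumes "k < mm"
  shows "(\<Sum>\<omega>\<in>Om n mm. H (case \<omega> of (a, b, c) \<Rightarrow> (a[k := b!(mm - Suc k)], b[mm - Suc k := a!k], c)))
         = sum H (Om n mm)"
proof -
  have P: "(case \<omega> of (a, b, c) \<Rightarrow> (a[k := b!(mm - Suc k)], b[mm - Suc k := a!k], c)) \<in> Om n mm \<and>
      (case (case \<omega> of (a, b, c) \<Rightarrow> (a[k := b!(mm - Suc k)], b[mm - Suc k := a!k], c)) of (a, b, c) \<Rightarrow> (a[k := b!(mm - Suc k)], b[mm - Suc k := a!k], c)) = \<omega>" if "\<omega> \<in> Om n mm" for \<omega>
  proof -
    obtain a b c where w: "\<omega> = (a, b, c)" "length a = mm" "length b = mm" "set a \<subseteq> clauses n"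
       "set b \<subseteq> clauses n" "set c \<subseteq> clauses n" "length c = mm"
    proof -
      obtain a b c where "\<omega> = (a, b, c)" by (cases \<omega>) auto
      then show ?thesis using that[of a b c] \<open>\<omega> \<in> Om n mm\<close> by (auto simp: Om_def clause_seqs_def)
    qed
    have 1: "b ! (mm - Suc k) \<in> clauses n" "a ! k \<in> clauses n"
      using w assms nth_mem[of "mm - Suc k" b] nth_mem[of k a] by auto
    have "set (a[k := b ! (mm - Suc k)]) \<subseteq> clauses n"
      using set_update_subset_insert[of a k "b ! (mm - Suc k)"] 1 w by blast
    moreover have "set (b[mm - Suc k := a ! k]) \<subseteq> clauses n"
      using set_update_subset_insert[of b "mm - Suc k" "a ! k"] 1 w by blast
    ultimately have "a[k := b ! (mm - Suc k)] \<in> clause_seqs n mm" "b[mm - Suc k := a ! k] \<in> clause_seqs n mm"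
      using w by (simp_all add: clause_seqs_def)
    moreover have "c \<in> clause_seqs n mm" using w by (simp add: clause_seqs_def)
    moreover have "mm - Suc k < mm" using assms by arith
    ultimately show ?thesis using w assms unfolding Om_def by simp
  qed
  show ?thesis
    by (rule sum.reindex_bij_witness[of _ "\<lambda>\<omega>. case \<omega> of (a, b, c) \<Rightarrow> (a[k := b!(mm - Suc k)], b[mm - Suc k := a!k], c)" "\<lambda>\<omega>. case \<omega> of (a, b, c) \<Rightarrow> (a[k := b!(mm - Suc k)], b[mm - Suc k := a!k], c)"])
       (use P in blast)+
qed

lemma swap2_sum:
  fixes H :: "_ \<Rightarrow> real"
  assumes "k < mm"
  shows "(\<Sum>\<omega>\<in>Om n mm. H (case \<omega> of (a, b, c) \<Rightarrow> (a[k := c!(mm - Suc k)], b, c[mm - Suc k := a!k])))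
         = sum H (Om n mm)"
proof -
  have P: "(case \<omega> of (a, b, c) \<Rightarrow> (a[k := c!(mm - Suc k)], b, c[mm - Suc k := a!k])) \<in> Om n mm \<and>
      (case (case \<omega> of (a, b, c) \<Rightarrow> (a[k := c!(mm - Suc k)], b, c[mm - Suc k := a!k])) of (a, b, c) \<Rightarrow> (a[k := c!(mm - Suc k)], b, c[mm - Suc k := a!k])) = \<omega>" if "\<omega> \<in> Om n mm" for \<omega>
  proof -
    obtain a b c where w: "\<omega> = (a, b, c)" "length a = mm" "length b = mm" "set a \<subseteq> clauses n"
       "set b \<subseteq> clauses n" "set c \<subseteq> clauses n" "length c = mm"
    proof -
      obtain a b c where "\<omega> = (a, b, c)" by (cases \<omega>) auto
      then show ?thesis using that[of a b c] \<open>\<omega> \<in> Om n mm\<close> by (auto simp: Om_def clause_seqs_def)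
    qed
    have 1: "c ! (mm - Suc k) \<in> clauses n" "a ! k \<in> clauses n"
      using w assms nth_mem[of "mm - Suc k" c] nth_mem[of k a] by auto
    have "set (a[k := c ! (mm - Suc k)]) \<subseteq> clauses n"
      using set_update_subset_insert[of a k "c ! (mm - Suc k)"] 1 w by blast
    moreover have "set (c[mm - Suc k := a ! k]) \<subseteq> clauses n"
      using set_update_subset_insert[of c "mm - Suc k" "a ! k"] 1 w by blast
    ultimately have "a[k := c ! (mm - Suc k)] \<in> clause_seqs n mm" "c[mm - Suc k := a ! k] \<in> clause_seqs n mm"
      using w by (simp_all add: clause_seqs_def)
    moreover have "b \<in> clause_seqs n mm" using w by (simp add: clause_seqs_def)
    moreover have "mm - Suc k < mm" using assms by arith
    ultimately show ?thesis using w assms unfolding Om_def by simp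
  qed
  show ?thesis
    by (rule sum.reindex_bij_witness[of _ "\<lambda>\<omega>. case \<omega> of (a, b, c) \<Rightarrow> (a[k := c!(mm - Suc k)], b, c[mm - Suc k := a!k])" "\<lambda>\<omega>. case \<omega> of (a, b, c) \<Rightarrow> (a[k := c!(mm - Suc k)], b, c[mm - Suc k := a!k])"])
       (use P in blast)+
qed

lemma sw1_facts:
  assumes "k < mm" "length a = mm" "length b = mm"
  shows "logZ n (Phi1 (a[k := b!(mm - Suc k)], b[mm - Suc k := a!k], c) k (mm - k))
           = logZ n (Phi1 (a, b, c) (Suc k) (mm - Suc k))"
    and "logZ n (Phi2 (a[k := b!(mm - Suc k)], b[mm - Suc k := a!k], c) k (mm - Suc k))
           = logZ n (Phi2 (a, b, c) k (mm - Suc k))"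
proof -
  have j: "mm - k = Suc (mm - Suc k)" "mm - Suc k < length b" "k < length a" using assms by arith+
  have "set (Phi1 (a[k := b!(mm - Suc k)], b[mm - Suc k := a!k], c) k (mm - k))
      = set (Phi1 (a, b, c) (Suc k) (mm - Suc k))"
    unfolding Phi1_def using j
    by (simp only: j(1) prod.case take_upd_Suc take_Suc_conv_app_nth take_upd_same) auto
  then show "logZ n (Phi1 (a[k := b!(mm - Suc k)], b[mm - Suc k := a!k], c) k (mm - k))
           = logZ n (Phi1 (a, b, c) (Suc k) (mm - Suc k))"
    unfolding logZ_def by (metis Z_prune_set)
  show "logZ n (Phi2 (a[k := b!(mm - Suc k)], b[mm - Suc k := a!k], c) k (mm - Suc k))
           = logZ n (Phi2 (a, b, c) k (mm - Suc k))"
    unfolding Phi2_def by (simp add: take_upd_same)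
qed

lemma sw2_facts:
  assumes "k < mm" "length a = mm" "length c = mm"
  shows "logZ n (Phi2 (a[k := c!(mm - Suc k)], b, c[mm - Suc k := a!k]) k (mm - k))
           = logZ n (Phi2 (a, b, c) (Suc k) (mm - Suc k))"
    and "logZ n (Phi1 (a[k := c!(mm - Suc k)], b, c[mm - Suc k := a!k]) k (mm - Suc k))
           = logZ n (Phi1 (a, b, c) k (mm - Suc k))"
proof -
  have j: "mm - k = Suc (mm - Suc k)" "mm - Suc k < length c" "k < length a" using assms by arith+
  have "set (Phi2 (a[k := c!(mm - Suc k)], b, c[mm - Suc k := a!k]) k (mm - k))
      = set (Phi2 (a, b, c) (Suc k) (mm - Suc k))"
    unfolding Phi2_def using j
    by (simp only: j(1) prod.case take_upd_Suc take_Suc_conv_app_nth take_upd_same) auto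
  then show "logZ n (Phi2 (a[k := c!(mm - Suc k)], b, c[mm - Suc k := a!k]) k (mm - k))
           = logZ n (Phi2 (a, b, c) (Suc k) (mm - Suc k))"
    unfolding logZ_def by (metis Z_prune_set)
  show "logZ n (Phi1 (a[k := c!(mm - Suc k)], b, c[mm - Suc k := a!k]) k (mm - Suc k))
           = logZ n (Phi1 (a, b, c) k (mm - Suc k))"
    unfolding Phi1_def by (simp add: take_upd_same)
qed

lemma key:
  assumes "k < mm" "n \<ge> 2"
  shows "Delta n mm (Suc k) - Delta' n mm (Suc k) = (G n mm (Suc k) - G n mm k) / card (Om n mm)"
proof -
  define W where "W = Om n mm"
  define A1 where "A1 \<omega> = logZ n (Phi1 \<omega> (Suc k) (mm - Suc k))" for \<omega>
  define B1 where "B1 \<omega> = logZ n (Phi1 \<omega> k (mm - Suc k))" for \<omega>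
  define C1 where "C1 \<omega> = logZ n (Phi1 \<omega> k (mm - k))" for \<omega>
  define A2 where "A2 \<omega> = logZ n (Phi2 \<omega> (Suc k) (mm - Suc k))" for \<omega>
  define B2 where "B2 \<omega> = logZ n (Phi2 \<omega> k (mm - Suc k))" for \<omega>
  define C2 where "C2 \<omega> = logZ n (Phi2 \<omega> k (mm - k))" for \<omega>
  have e: "mm - Suc k + 1 = mm - k" "Suc (mm - Suc k) = mm - k" using assms by arith+
  have D: "Delta n mm (Suc k) = (\<Sum>\<omega>\<in>W. (A1 \<omega> - B1 \<omega>) * (A2 \<omega> - B2 \<omega>)) / card W"
    unfolding Delta_def expect_eq[OF assms(2)] W_def
    by (intro arg_cong2[where f="(/)"] sum.cong refl)
       (simp add: A1_def B1_def A2_def B2_def ln_ratio Phi_sub)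
  have D': "Delta' n mm (Suc k) = (\<Sum>\<omega>\<in>W. (C1 \<omega> - B1 \<omega>) * (C2 \<omega> - B2 \<omega>)) / card W"
    unfolding Delta'_def expect_eq[OF assms(2)] W_def
    by (intro arg_cong2[where f="(/)"] sum.cong refl)
       (simp add: C1_def B1_def C2_def B2_def ln_ratio Phi_sub e)
  have s1: "(\<Sum>\<omega>\<in>W. C1 \<omega> * B2 \<omega>) = (\<Sum>\<omega>\<in>W. A1 \<omega> * B2 \<omega>)"
  proof -
    have "(\<Sum>\<omega>\<in>W. C1 \<omega> * B2 \<omega>) = (\<Sum>\<omega>\<in>W. (\<lambda>\<omega>. C1 \<omega> * B2 \<omega>)
        (case \<omega> of (a, b, c) \<Rightarrow> (a[k := b!(mm - Suc k)], b[mm - Suc k := a!k], c)))"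
      unfolding W_def by (rule swap1_sum[OF assms(1), symmetric])
    also have "\<dots> = (\<Sum>\<omega>\<in>W. A1 \<omega> * B2 \<omega>)"
    proof (rule sum.cong[OF refl])
      fix \<omega> assume "\<omega> \<in> W"
      then obtain a b c where w: "\<omega> = (a, b, c)" "length a = mm" "length b = mm"
        unfolding W_def Om_def clause_seqs_def by auto
      show "(\<lambda>\<omega>. C1 \<omega> * B2 \<omega>) (case \<omega> of (a, b, c) \<Rightarrow> (a[k := b!(mm - Suc k)], b[mm - Suc k := a!k], c))
          = A1 \<omega> * B2 \<omega>"
        using sw1_facts[OF assms(1) w(2,3), of n c] unfolding w(1) A1_def B2_def C1_def
        by simp
    qed
    finally show ?thesis .
  qed
  have s2: "(\<Sum>\<omega>\<in>W. B1 \<omega> * C2 \<omega>) = (\<Sum>\<omega>\<in>W. B1 \<omega> * A2 \<omega>)"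
  proof -
    have "(\<Sum>\<omega>\<in>W. B1 \<omega> * C2 \<omega>) = (\<Sum>\<omega>\<in>W. (\<lambda>\<omega>. B1 \<omega> * C2 \<omega>)
        (case \<omega> of (a, b, c) \<Rightarrow> (a[k := c!(mm - Suc k)], b, c[mm - Suc k := a!k])))"
      unfolding W_def by (rule swap2_sum[OF assms(1), symmetric])
    also have "\<dots> = (\<Sum>\<omega>\<in>W. B1 \<omega> * A2 \<omega>)"
    proof (rule sum.cong[OF refl])
      fix \<omega> assume "\<omega> \<in> W"
      then obtain a b c where w: "\<omega> = (a, b, c)" "length a = mm" "length c = mm"
        unfolding W_def Om_def clause_seqs_def by auto
      show "(\<lambda>\<omega>. B1 \<omega> * C2 \<omega>) (case \<omega> of (a, b, c) \<Rightarrow> (a[k := c!(mm - Suc k)], b, c[mm - Suc k := a!k]))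
          = B1 \<omega> * A2 \<omega>"
        using sw2_facts[OF assms(1) w(2,3), of n b] unfolding w(1) A2_def B1_def C2_def
        by simp
    qed
    finally show ?thesis .
  qed
  have GS: "G n mm (Suc k) = (\<Sum>\<omega>\<in>W. A1 \<omega> * A2 \<omega>)" "G n mm k = (\<Sum>\<omega>\<in>W. C1 \<omega> * C2 \<omega>)"
    unfolding G_def W_def A1_def A2_def C1_def C2_def by simp_all
  have L: "(\<Sum>\<omega>\<in>W. (A1 \<omega> - B1 \<omega>) * (A2 \<omega> - B2 \<omega>)) - (\<Sum>\<omega>\<in>W. (C1 \<omega> - B1 \<omega>) * (C2 \<omega> - B2 \<omega>))
     = (\<Sum>\<omega>\<in>W. (A1 \<omega> - B1 \<omega>) * (A2 \<omega> - B2 \<omega>) - (C1 \<omega> - B1 \<omega>) * (C2 \<omega> - B2 \<omega>))"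
    by (simp add: sum_subtractf)
  have R: "(\<Sum>\<omega>\<in>W. A1 \<omega> * A2 \<omega>) - (\<Sum>\<omega>\<in>W. C1 \<omega> * C2 \<omega>)
      - ((\<Sum>\<omega>\<in>W. A1 \<omega> * B2 \<omega>) - (\<Sum>\<omega>\<in>W. C1 \<omega> * B2 \<omega>))
      - ((\<Sum>\<omega>\<in>W. B1 \<omega> * A2 \<omega>) - (\<Sum>\<omega>\<in>W. B1 \<omega> * C2 \<omega>))
     = (\<Sum>\<omega>\<in>W. A1 \<omega> * A2 \<omega> - C1 \<omega> * C2 \<omega> - (A1 \<omega> * B2 \<omega> - C1 \<omega> * B2 \<omega>)
           - (B1 \<omega> * A2 \<omega> - B1 \<omega> * C2 \<omega>))"
    by (simp add: sum_subtractf)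
  have P: "(\<Sum>\<omega>\<in>W. (A1 \<omega> - B1 \<omega>) * (A2 \<omega> - B2 \<omega>) - (C1 \<omega> - B1 \<omega>) * (C2 \<omega> - B2 \<omega>))
     = (\<Sum>\<omega>\<in>W. A1 \<omega> * A2 \<omega> - C1 \<omega> * C2 \<omega> - (A1 \<omega> * B2 \<omega> - C1 \<omega> * B2 \<omega>)
           - (B1 \<omega> * A2 \<omega> - B1 \<omega> * C2 \<omega>))"
    by (rule sum.cong[OF refl]) (simp add: algebra_simps)
  have "Delta n mm (Suc k) - Delta' n mm (Suc k)
     = ((\<Sum>\<omega>\<in>W. (A1 \<omega> - B1 \<omega>) * (A2 \<omega> - B2 \<omega>)) - (\<Sum>\<omega>\<in>W. (C1 \<omega> - B1 \<omega>) * (C2 \<omega> - B2 \<omega>))) / card W"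
    unfolding D D' by (simp add: diff_divide_distrib)
  also have "\<dots> = (G n mm (Suc k) - G n mm k) / card W"
    unfolding L P R[symmetric] s1 s2 GS by simp
  finally show ?thesis unfolding W_def .
qed

lemma telescope: "(\<Sum>M = 1..(t::nat). (g M - g (M - 1)) / (N::real)) = (g t - g 0) / N"
  by (induction t) (simp_all add: diff_divide_distrib)

lemma sum3: "sum h (A \<times> B \<times> D) = (\<Sum>a\<in>A. \<Sum>b\<in>B. \<Sum>c\<in>D. h (a, b, c))"
  by (simp add: sum.cartesian_product)

lemma var_alg:
  fixes F :: "'a \<Rightarrow> real"
  assumes "finite C" "C \<noteq> {}"
  shows "(\<Sum>a\<in>C. (F a - sum F C / card C)\<^sup>2) = (\<Sum>a\<in>C. (F a)\<^sup>2) - (sum F C)\<^sup>2 / card C"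
proof -
  define \<mu> where "\<mu> = sum F C / card C"
  have K: "real (card C) > 0" using assms by auto
  have "(\<Sum>a\<in>C. (F a - \<mu>)\<^sup>2) = (\<Sum>a\<in>C. (F a)\<^sup>2 - 2 * \<mu> * F a + \<mu>\<^sup>2)"
    by (rule sum.cong) (auto simp: power2_diff)
  also have "\<dots> = (\<Sum>a\<in>C. (F a)\<^sup>2) - 2 * \<mu> * sum F C + card C * \<mu>\<^sup>2"
    by (simp add: sum.distrib sum_subtractf sum_distrib_left)
  also have "\<dots> = (\<Sum>a\<in>C. (F a)\<^sup>2) - (sum F C)\<^sup>2 / card C"
    using K unfolding \<mu>_def by (simp add: field_simps power2_eq_square)
  finally show ?thesis unfolding \<mu>_def .
qed

theorem lemma2p4:
  fixes d :: real and m :: "nat \<Rightarrow> nat" and n :: nat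
  assumes "0 < d" and "d < 2"
    and "(\<lambda>k. real (m k)) \<sim>[at_top] (\<lambda>k. d * real k / 2)"
    and "n \<ge> 2"
  shows "measure_pmf.variance (sample n (m n)) (\<lambda>\<omega>. logZ n (Phi1 \<omega> (m n) 0))
         = (\<Sum>M = 1..m n. Delta n (m n) M - Delta' n (m n) M)"
proof -
  define mm where "mm = m n"
  define C where "C = clause_seqs n mm"
  define F where "F a = logZ n a" for a
  have Om: "Om n mm = C \<times> C \<times> C" unfolding Om_def C_def ..
  have Cf: "finite C" "C \<noteq> {}" unfolding C_def using clause_seqs_finite clause_seqs_ne assms(4) by auto
  define K where "K = real (card C)"
  have Kp: "K > 0" unfolding K_def using Cf by auto
  have N: "real (card (Om n mm)) = K ^ 3"
    unfolding Om K_def by (simp add: card_cartesian_product power3_eq_cube)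
  have lenC: "length a = mm" if "a \<in> C" for a using that unfolding C_def clause_seqs_def by auto
  have f_eq: "logZ n (Phi1 \<omega> mm 0) = F (fst \<omega>)" if "\<omega> \<in> Om n mm" for \<omega>
    using that lenC unfolding Om F_def Phi1_def by (auto split: prod.splits)
  have Gm: "G n mm mm = (\<Sum>\<omega>\<in>Om n mm. (F (fst \<omega>))\<^sup>2)"
    unfolding G_def
    by (rule sum.cong[OF refl]) (use lenC in \<open>auto simp: Om F_def Phi1_def Phi2_def power2_eq_square split: prod.splits\<close>)
  have G0: "G n mm 0 = (\<Sum>\<omega>\<in>Om n mm. F (fst (snd \<omega>)) * F (snd (snd \<omega>)))"
    unfolding G_def
    by (rule sum.cong[OF refl]) (use lenC in \<open>auto simp: Om F_def Phi1_def Phi2_def split: prod.splits\<close>)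
  have S1: "(\<Sum>\<omega>\<in>Om n mm. F (fst \<omega>)) = K^2 * sum F C"
    unfolding Om sum3 by (simp add: K_def sum_distrib_left sum_distrib_right power2_eq_square mult_ac)
  have S2: "(\<Sum>\<omega>\<in>Om n mm. (F (fst \<omega>))\<^sup>2) = K^2 * (\<Sum>a\<in>C. (F a)\<^sup>2)"
    unfolding Om sum3 by (simp add: K_def sum_distrib_left sum_distrib_right power2_eq_square mult_ac)
  have S0: "(\<Sum>\<omega>\<in>Om n mm. F (fst (snd \<omega>)) * F (snd (snd \<omega>))) = K * (sum F C)^2"
    unfolding Om sum3 by (simp add: K_def sum_distrib_left sum_distrib_right power2_eq_square mult_ac)
  have SV: "(\<Sum>\<omega>\<in>Om n mm. (F (fst \<omega>) - sum F C / K)\<^sup>2) = K^2 * (\<Sum>a\<in>C. (F a - sum F C / K)\<^sup>2)"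
    unfolding Om sum3 by (simp add: K_def sum_distrib_left sum_distrib_right power2_eq_square mult_ac)
  have "measure_pmf.variance (sample n mm) (\<lambda>\<omega>. logZ n (Phi1 \<omega> mm 0))
      = (\<Sum>\<omega>\<in>Om n mm. (F (fst \<omega>) - sum F C / K)\<^sup>2) / K^3"
  proof -
    have mu: "measure_pmf.expectation (sample n mm) (\<lambda>\<omega>. logZ n (Phi1 \<omega> mm 0)) = sum F C / K"
      unfolding expect_eq[OF assms(4)] N
      using sum.cong[OF refl f_eq, of "Om n mm"] S1 Kp by (simp add: power2_eq_square power3_eq_cube)
    show ?thesis
      unfolding mu unfolding expect_eq[OF assms(4)] N
      by (rule arg_cong2[where f="(/)"], rule sum.cong[OF refl]) (simp_all add: f_eq)
  qed
  also have "\<dots> = (G n mm mm - G n mm 0) / card (Om n mm)"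
    unfolding SV Gm G0 S2 S0 N var_alg[OF Cf, of F, folded K_def]
    using Kp by (simp add: field_simps power2_eq_square power3_eq_cube)
  also have "\<dots> = (\<Sum>M = 1..mm. (G n mm M - G n mm (M - 1)) / card (Om n mm))"
    by (rule telescope[symmetric])
  also have "\<dots> = (\<Sum>M = 1..mm. Delta n mm M - Delta' n mm M)"
  proof (rule sum.cong[OF refl])
    fix M assume "M \<in> {1..mm}"
    then obtain k where k: "M = Suc k" "k < mm" by (cases M) auto
    show "(G n mm M - G n mm (M - 1)) / card (Om n mm) = Delta n mm M - Delta' n mm M"
      using key[OF k(2) assms(4)] k(1) by simp
  qed
  finally show ?thesis unfolding mm_def .
qed

end
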